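(* Consider the mining game with $N\ge2$ miners, costs $0<c_1\le\dots\le c_N$, reward $R>0$ and capacity $\gamma\ge0$, at parameter values where the number $n$ of active miners does not change under small perturbations of the costs. For active miners $i\ne j$, the equilibrium profit $\pi_i^*$ of miner $i$ satisfies $$\frac{\partial\pi_i^*}{\partial c_i}<0,\qquad \frac{\partial\pi_i^*}{\partial c_j}>0.$$
   Context: Mining game: $N\ge2$ miners with costs-per-hash $0<c_1\le\dots\le c_N$; each miner $i$ chooses $h_i\ge0$, $H=\sum_jh_j$, payoff $\frac{h_i}{H}R-c_ih_i-\frac{\gamma}{2}h_i^2$ if $H>0$ and $0$ if $H=0$. The pure Nash equilibrium $h^*$ is unique; its active miners ($h_i^*>0$) are $1,\dots,n$ for some $2\le n\le N$, with $c^{(n)}=\sum_{i=1}^nc_i$, $H^*=\frac{\sqrt{(c^{(n)})^2+4(n-1)R\gamma}-c^{(n)}}{2\gamma}$ for $\gamma>0$ (and $(n-1)R/c^{(n)}$ for $\gamma=0$), and $h_i^*=H^*\frac{R-c_iH^*}{R+\gamma(H^* )^2}$ for $i\le n$. The equilibrium profit is $\pi_i^*=\frac{R}{H^*}h_i^*-c_ih_i^*-\frac{\gamma}{2}(h_i^* )^2$, and derivatives are taken of these closed-form expressions with $n$ held fixed. *)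

theory Defs
  imports Complex_Main
begin

definition payoff :: "nat \<Rightarrow> real \<Rightarrow> real \<Rightarrow> (nat \<Rightarrow> real) \<Rightarrow> (nat \<Rightarrow> real) \<Rightarrow> nat \<Rightarrow> real" where
  "payoff N R \<gamma> c h i =
     (let H = (\<Sum>j=1..N. h j) in
      if H > 0 then h i / H * R - c i * h i - \<gamma> / 2 * (h i)^2 else 0)"

definition is_nash :: "nat \<Rightarrow> real \<Rightarrow> real \<Rightarrow> (nat \<Rightarrow> real) \<Rightarrow> (nat \<Rightarrow> real) \<Rightarrow> bool" where
  "is_nash N R \<gamma> c h \<longleftrightarrow>
     (\<forall>i\<in>{1..N}. h i \<ge> 0) \<and>
     (\<forall>i\<in>{1..N}. \<forall>x\<ge>0. payoff N R \<gamma> c (h(i := x)) i \<le> payoff N R \<gamma> c h i)"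

definition cost_sum :: "nat \<Rightarrow> (nat \<Rightarrow> real) \<Rightarrow> real" where
  "cost_sum n c = (\<Sum>i=1..n. c i)"

definition H_star :: "nat \<Rightarrow> real \<Rightarrow> real \<Rightarrow> (nat \<Rightarrow> real) \<Rightarrow> real" where
  "H_star n R \<gamma> c =
     (if \<gamma> > 0
      then (sqrt ((cost_sum n c)^2 + 4 * (real n - 1) * R * \<gamma>) - cost_sum n c) / (2 * \<gamma>)
      else (real n - 1) * R / cost_sum n c)"

definition h_star :: "nat \<Rightarrow> real \<Rightarrow> real \<Rightarrow> (nat \<Rightarrow> real) \<Rightarrow> nat \<Rightarrow> real" where
  "h_star n R \<gamma> c i =
     (let H = H_star n R \<gamma> c in H * (R - c i * H) / (R + \<gamma> * H^2))"

definition pi_star :: "nat \<Rightarrow> real \<Rightarrow> real \<Rightarrow> (nat \<Rightarrow> real) \<Rightarrow> nat \<Rightarrow> real" where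
  "pi_star n R \<gamma> c i =
     (let H = H_star n R \<gamma> c; h = h_star n R \<gamma> c i in
      R / H * h - c i * h - \<gamma> / 2 * h^2)"

end

theory Submission imports Defs begin

lemma P_deriv:
  fixes R g :: real
  assumes Hx: "(Hx has_real_derivative Hd) (at x0)" and cx: "(cx has_real_derivative cd) (at x0)"
    and "R > 0" "g \<ge> 0"
  shows "((\<lambda>x. (R - cx x * Hx x)^2*(2*R+g*(Hx x)^2)/(2*(R+g*(Hx x)^2)^2)) has_real_derivative
     ((R - cx x0 * Hx x0) * (-(cd * Hx x0 + cx x0 * Hd)) * ((2*R+g*(Hx x0)^2)/(R+g*(Hx x0)^2)^2)
      + (R - cx x0 * Hx x0)^2/2 * (-(3*R+g*(Hx x0)^2)*(2*g*Hx x0*Hd)/(R+g*(Hx x0)^2)^3))) (at x0)"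
proof -
  define H0 where "H0 = Hx x0"
  define u where "u = R + g*H0^2"
  have d: "u > 0" using assms unfolding u_def by (simp add: add_pos_nonneg)
  have da: "((\<lambda>x. R - cx x * Hx x) has_real_derivative (-(cd * H0 + cx x0 * Hd))) (at x0)"
    unfolding H0_def by (auto intro!: derivative_eq_intros Hx cx)
  have n: "((\<lambda>x. 2*R+g*(Hx x)^2) has_real_derivative (2*g*H0*Hd)) (at x0)"
    unfolding H0_def by (auto intro!: derivative_eq_intros Hx)
  have m: "((\<lambda>x. (R+g*(Hx x)^2)^2) has_real_derivative (2*u*(2*g*H0*Hd))) (at x0)"
    unfolding H0_def u_def by (auto intro!: derivative_eq_intros Hx)
  have df0: "((\<lambda>x. (2*R+g*(Hx x)^2)/(R+g*(Hx x)^2)^2) has_real_derivative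
      ((2*g*H0*Hd) * u^2 - (2*R+g*H0^2) * (2*u*(2*g*H0*Hd))) / (u^2 * u^2)) (at x0)"
    using DERIV_divide[OF n m] d unfolding H0_def u_def by simp
  have eq: "((2*g*H0*Hd) * u^2 - (2*R+g*H0^2) * (2*u*(2*g*H0*Hd))) / (u^2 * u^2)
      = (-(3*R+g*H0^2)*(2*g*H0*Hd)/u^3)"
  proof -
    have "((2*g*H0*Hd) * u^2 - (2*R+g*H0^2) * (2*u*(2*g*H0*Hd))) = u * (-(3*R+g*H0^2)*(2*g*H0*Hd))"
      unfolding u_def by (simp add: algebra_simps power2_eq_square)
    then show ?thesis using d by (simp add: power2_eq_square power3_eq_cube)
  qed
  have df: "((\<lambda>x. (2*R+g*(Hx x)^2)/(R+g*(Hx x)^2)^2) has_real_derivative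
      (-(3*R+g*H0^2)*(2*g*H0*Hd)/u^3)) (at x0)" using df0 eq by simp
  have sq: "((\<lambda>x. (R - cx x * Hx x)^2) has_real_derivative (2 * (R - cx x0 * H0) * (-(cd * H0 + cx x0 * Hd)))) (at x0)"
    using DERIV_power[OF da, of 2] unfolding H0_def by (simp add: algebra_simps)
  note F = DERIV_cdivide[OF DERIV_mult[OF sq df], of 2]
  have fe: "\<forall>\<^sub>F x in nhds x0. (R - cx x * Hx x)^2 * ((2*R+g*(Hx x)^2)/(R+g*(Hx x)^2)^2) / 2
     = (R - cx x * Hx x)^2*(2*R+g*(Hx x)^2)/(2*(R+g*(Hx x)^2)^2)" by simp
  have ve: "((2 * (R - cx x0 * H0) * (-(cd * H0 + cx x0 * Hd))) * ((2*R+g*(Hx x0)^2)/(R+g*(Hx x0)^2)^2)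
      + (-(3*R+g*H0^2)*(2*g*H0*Hd)/u^3) * (R - cx x0 * Hx x0)^2) / 2
     = (R - cx x0 * Hx x0) * (-(cd * Hx x0 + cx x0 * Hd)) * ((2*R+g*(Hx x0)^2)/(R+g*(Hx x0)^2)^2)
      + (R - cx x0 * Hx x0)^2/2 * (-(3*R+g*(Hx x0)^2)*(2*g*Hx x0*Hd)/(R+g*(Hx x0)^2)^3)"
  proof -
    have gen: "\<And>A B C D E::real. ((2*A*B)*C + E*D)/2 = A*B*C + D/2*E" by (simp add: field_simps)
    show ?thesis unfolding H0_def u_def by (rule gen)
  qed
  show ?thesis by (rule DERIV_cong_ev[OF refl fe ve, THEN iffD1, OF F])
qed

lemma cost_upd:
  assumes "k \<in> {1..n}"
  shows "cost_sum n (c(k:=x)) = x + (cost_sum n c - c k)"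
proof -
  have f: "finite {1..n}" by simp
  have A: "cost_sum n (c(k:=x)) = (c(k:=x)) k + (\<Sum>i\<in>{1..n}-{k}. (c(k:=x)) i)"
    unfolding cost_sum_def using sum.remove[OF f assms] by blast
  have B: "(\<Sum>i\<in>{1..n}-{k}. (c(k:=x)) i) = (\<Sum>i\<in>{1..n}-{k}. c i)"
    by (rule sum.cong) auto
  have D: "cost_sum n c = c k + (\<Sum>i\<in>{1..n}-{k}. c i)"
    unfolding cost_sum_def using sum.remove[OF f assms] by blast
  have E: "(c(k:=x)) k = x" by simp
  show ?thesis using A B D E by linarith
qed

lemma H_basic:
  assumes "R > 0" "g \<ge> 0" "n \<ge> 2" "cost_sum n c > 0"
  shows "H_star n R g c > 0" "2*g*H_star n R g c + cost_sum n c > 0"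
    "g > 0 \<Longrightarrow> sqrt ((cost_sum n c)^2 + 4 * (real n - 1) * R * g) = 2*g*H_star n R g c + cost_sum n c"
proof -
  define C where "C = cost_sum n c"
  have C: "C > 0" using assms C_def by simp
  have n1: "real n - 1 > 0" using assms by simp
  show "g > 0 \<Longrightarrow> sqrt ((cost_sum n c)^2 + 4 * (real n - 1) * R * g) = 2*g*H_star n R g c + cost_sum n c"
    unfolding H_star_def by simp
  show H: "H_star n R g c > 0"
  proof (cases "g > 0")
    case True
    have "4 * (real n - 1) * R * g > 0" using n1 assms True by simp
    then have "C^2 < C^2 + 4 * (real n - 1) * R * g" by simp
    then have "sqrt (C^2) < sqrt (C^2 + 4 * (real n - 1) * R * g)" by (rule real_sqrt_less_mono)
    then have "C < sqrt (C^2 + 4 * (real n - 1) * R * g)" using C by simp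
    then show ?thesis using True unfolding H_star_def C_def by simp
  next
    case False
    then show ?thesis unfolding H_star_def using C n1 assms C_def by simp
  qed
  show "2*g*H_star n R g c + cost_sum n c > 0" using H assms by (simp add: add_nonneg_pos)
qed

lemma H_deriv:
  assumes "R > 0" "g \<ge> 0" "n \<ge> 2" "cost_sum n c > 0" "k \<in> {1..n}"
  shows "((\<lambda>x. H_star n R g (c(k:=x))) has_real_derivative
     (- H_star n R g c / (2*g*H_star n R g c + cost_sum n c))) (at (c k))"
proof -
  define C where "C = cost_sum n c"
  define S where "S = C - c k"
  define H where "H = H_star n R g c"
  have C: "C > 0" using assms C_def by simp
  have upd: "\<And>x. cost_sum n (c(k:=x)) = x + S" using cost_upd[OF assms(5)] S_def C_def by simp
  have ckS: "c k + S = C" using S_def by simp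
  have Hb: "H > 0" "2*g*H + C > 0" using H_basic[OF assms(1-4)] H_def C_def by auto
  show ?thesis
  proof (cases "g > 0")
    case True
    define K where "K = 4 * (real n - 1) * R * g"
    have eqf: "(\<lambda>x. H_star n R g (c(k:=x))) = (\<lambda>x. (sqrt ((x+S)^2 + K) - (x+S)) / (2*g))"
      using True unfolding H_star_def upd K_def by simp
    have sq: "sqrt (C^2 + K) = 2*g*H + C" using H_basic(3)[OF assms(1-4) True] H_def C_def K_def by simp
    have Kp: "K \<ge> 0" using assms True unfolding K_def by simp
    have pos: "C^2 + K > 0" using C Kp by (simp add: add_pos_nonneg)
    have "((\<lambda>x. (sqrt ((x+S)^2 + K) - (x+S)) / (2*g)) has_real_derivative
        ((inverse (sqrt (C^2+K)) / 2 * (2 * C) - 1) / (2*g))) (at (c k))"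
    proof -
      have i: "((\<lambda>x. (x+S)^2+K) has_real_derivative 2*C) (at (c k))"
        by (auto intro!: derivative_eq_intros simp: ckS)
      have r: "(sqrt has_real_derivative inverse (sqrt (C^2+K)) / 2) (at ((c k + S)^2 + K))"
        using DERIV_real_sqrt[OF pos] ckS by simp
      have "((\<lambda>x. sqrt ((x+S)^2 + K)) has_real_derivative inverse (sqrt (C^2+K)) / 2 * (2 * C)) (at (c k))"
        using DERIV_chain2[OF r i] by simp
      moreover have "((\<lambda>x. x+S) has_real_derivative 1) (at (c k))" by (auto intro!: derivative_eq_intros)
      ultimately show ?thesis using DERIV_cdivide[OF DERIV_diff] by blast
    qed
    moreover have "((inverse (sqrt (C^2+K)) / 2 * (2 * C) - 1) / (2*g)) = - H / (2*g*H + C)"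
    proof -
      have "inverse (2*g*H+C) / 2 * (2*C) - 1 = (-(2*g*H))/(2*g*H+C)" using Hb by (simp add: field_simps)
      then have "(inverse (2*g*H+C) / 2 * (2*C) - 1) / (2*g) = (-(2*g*H))/(2*g*H+C)/(2*g)" by simp
      also have "... = ((-(2*g*H))/(2*g))/(2*g*H+C)" by (simp only: divide_divide_eq_left mult.commute)
      also have "(-(2*g*H))/(2*g) = -H" using True by simp
      finally show ?thesis unfolding sq by simp
    qed
    ultimately show ?thesis unfolding eqf H_def C_def by simp
  next
    case False
    then have g0: "g = 0" using assms by simp
    have eqf: "(\<lambda>x. H_star n R g (c(k:=x))) = (\<lambda>x. (real n - 1) * R / (x + S))"
      using g0 unfolding H_star_def upd by simp
    have "((\<lambda>x. (real n - 1) * R / (x + S)) has_real_derivative (- ((real n - 1) * R) / C^2)) (at (c k))"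
      apply (rule derivative_eq_intros refl | simp add: ckS)+
      unfolding ckS using C by (simp_all add: power2_eq_square)
    moreover have "- ((real n - 1) * R) / C^2 = - H / (2*g*H + C)"
      using g0 C unfolding H_def H_star_def C_def by (simp add: power2_eq_square)
    ultimately show ?thesis unfolding eqf H_def C_def by simp
  qed
qed

lemma P_identity:
  fixes R g H c :: real
  assumes "H \<noteq> 0" "R > 0" "g \<ge> 0"
  shows "R / H * (H*(R-c*H)/(R+g*H^2)) - c * (H*(R-c*H)/(R+g*H^2)) - g/2*(H*(R-c*H)/(R+g*H^2))^2
     = (R-c*H)^2*(2*R+g*H^2)/(2*(R+g*H^2)^2)"
proof -
  define u where "u = R+g*H^2"
  define a where "a = R-c*H"
  have d: "u > 0" using assms unfolding u_def by (simp add: add_pos_nonneg)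
  have 1: "R / H * (H*a/u) = R*a/u" using assms(1) by simp
  have 2: "R*a/u - c * (H*a/u) = a*a/u" proof -
    have "R*a/u - c * (H*a/u) = (R - c*H)*a/u" by (simp add: diff_divide_distrib algebra_simps)
    then show ?thesis unfolding a_def by simp
  qed
  have 3: "(H*a/u)^2 = H^2*a^2/u^2" by (simp add: power_divide power_mult_distrib)
  have 4: "2*R+g*H^2 = 2*u - g*H^2" unfolding u_def by simp
  have 5: "a*a/u - g/2*(H^2*a^2/u^2) = a^2*(2*u - g*H^2)/(2*u^2)"
    using d by (simp add: field_simps power2_eq_square)
  show ?thesis unfolding u_def[symmetric] a_def[symmetric] using 1 2 3 4 5 assms(1) by simp
qed

lemma pi_deriv:
  assumes "R > 0" "g \<ge> 0" "n \<ge> 2" "cost_sum n c > 0" "k \<in> {1..n}"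
    and cx: "((\<lambda>x. (c(k:=x)) i) has_real_derivative cd) (at (c k))"
  defines "H \<equiv> H_star n R g c" and "Q \<equiv> 2*g*H_star n R g c + cost_sum n c"
  shows "((\<lambda>x. pi_star n R g (c(k:=x)) i) has_real_derivative
     ((R - c i * H) * (-(cd * H + c i * (-H/Q))) * ((2*R+g*H^2)/(R+g*H^2)^2)
      + (R - c i * H)^2/2 * (-(3*R+g*H^2)*(2*g*H*(-H/Q))/(R+g*H^2)^3))) (at (c k))"
proof -
  define Hx where "Hx = (\<lambda>x. H_star n R g (c(k:=x)))"
  define cx where "cx = (\<lambda>x. (c(k:=x)) i)"
  have Hd: "(Hx has_real_derivative (-H/Q)) (at (c k))"
    using H_deriv[OF assms(1-5)] unfolding Hx_def H_def Q_def .
  have cxd: "(cx has_real_derivative cd) (at (c k))" using cx unfolding cx_def .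
  have Hx0: "Hx (c k) = H" unfolding Hx_def H_def by simp
  have cx0: "cx (c k) = c i" unfolding cx_def by simp
  have Hpos: "H > 0" using H_basic[OF assms(1-4)] H_def by simp
  have "isCont Hx (c k)" by (rule DERIV_isCont[OF Hd])
  then have "(Hx \<longlongrightarrow> Hx (c k)) (nhds (c k))"
    unfolding isCont_def tendsto_at_iff_tendsto_nhds .
  then have ev: "\<forall>\<^sub>F x in nhds (c k). 0 < Hx x" using order_tendstoD(1) Hpos Hx0 by simp
  have fe: "\<forall>\<^sub>F x in nhds (c k). (R - cx x * Hx x)^2*(2*R+g*(Hx x)^2)/(2*(R+g*(Hx x)^2)^2)
      = pi_star n R g (c(k:=x)) i"
  proof (rule eventually_mono[OF ev])
    fix x assume "0 < Hx x"
    then show "(R - cx x * Hx x)^2*(2*R+g*(Hx x)^2)/(2*(R+g*(Hx x)^2)^2) = pi_star n R g (c(k:=x)) i"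
      unfolding pi_star_def h_star_def Let_def Hx_def cx_def
      using P_identity[of "H_star n R g (c(k:=x))" R g "(c(k:=x)) i"] assms(1,2) by simp
  qed
  show ?thesis
    using DERIV_cong_ev[OF refl fe refl, THEN iffD1, OF P_deriv[OF Hd cxd assms(1,2)]]
    unfolding Hx0 cx0 .
qed

lemma Sk_pos:
  assumes "\<forall>k\<in>{1..n}. c k > 0" "n \<ge> 2" "k \<in> {1..n}"
  shows "cost_sum n c - c k > 0"
proof -
  have f: "finite {1..n}" by simp
  have D: "cost_sum n c = c k + (\<Sum>i\<in>{1..n}-{k}. c i)"
    unfolding cost_sum_def using sum.remove[OF f assms(3)] by blast
  have ne: "{1..n}-{k} \<noteq> {}"
  proof (cases "k = 1")
    case True then have "2 \<in> {1..n}-{k}" using assms by auto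
    then show ?thesis by blast
  next
    case False then have "1 \<in> {1..n}-{k}" using assms by auto
    then show ?thesis by blast
  qed
  have "(\<Sum>i\<in>{1..n}-{k}. c i) > 0" by (rule sum_pos) (use ne assms in auto)
  then show ?thesis using D by simp
qed

theorem propositionB1:
  fixes N n i j :: nat and c :: "nat \<Rightarrow> real" and R \<gamma> :: real
  assumes "N \<ge> 2"
    and "\<forall>k\<in>{1..N}. c k > 0"
    and "\<forall>k\<in>{1..N}. \<forall>l\<in>{1..N}. k \<le> l \<longrightarrow> c k \<le> c l"
    and "R > 0" and "\<gamma> \<ge> 0"
    and "2 \<le> n" and "n \<le> N"
    and "\<forall>k\<in>{1..n}. h_star n R \<gamma> c k > 0"
    and "is_nash N R \<gamma> c (\<lambda>k. if k \<in> {1..n} then h_star n R \<gamma> c k else 0)"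
    and "i \<in> {1..n}" and "j \<in> {1..n}" and "i \<noteq> j"
  shows "(\<exists>D. ((\<lambda>x. pi_star n R \<gamma> (c(i := x)) i) has_real_derivative D) (at (c i)) \<and> D < 0)
       \<and> (\<exists>D. ((\<lambda>x. pi_star n R \<gamma> (c(j := x)) i) has_real_derivative D) (at (c j)) \<and> D > 0)"
proof -
  have cpos: "\<forall>k\<in>{1..n}. c k > 0" using assms(2,7) by auto
  have C: "cost_sum n c > 0" unfolding cost_sum_def by (rule sum_pos) (use cpos assms(6) in auto)
  define H where "H = H_star n R \<gamma> c"
  define Q where "Q = 2*\<gamma>*H_star n R \<gamma> c + cost_sum n c"
  define u where "u = R + \<gamma>*H^2"
  define a where "a = R - c i * H"
  have Hp: "H > 0" and Qp: "Q > 0" using H_basic[OF assms(4,5,6) C] H_def Q_def by auto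
  have up: "u > 0" using assms(4,5) u_def by (simp add: add_pos_nonneg)
  have ci: "c i > 0" using cpos assms(10) by simp
  have "h_star n R \<gamma> c i > 0" using assms(8,10) by simp
  then have "H * a / u > 0" unfolding h_star_def Let_def H_def[symmetric] a_def u_def .
  then have ap: "a > 0" using Hp up by (simp add: zero_less_divide_iff zero_less_mult_iff)
  have aR: "a \<le> R" using ci Hp a_def by simp
  have gH: "\<gamma> * H \<ge> 0" "\<gamma> * H^2 \<ge> 0" using Hp assms(5) by auto
  have hq: "H / Q > 0" using Hp Qp by simp
  have di: "((\<lambda>x. (c(i:=x)) i) has_real_derivative 1) (at (c i))" by simp
  note Di = pi_deriv[OF assms(4,5,6) C assms(10) di, folded H_def Q_def]
  define Di where "Di = a * (-(1 * H + c i * (-H/Q))) * ((2*R+\<gamma>*H^2)/u^2)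
      + a^2/2 * (-(3*R+\<gamma>*H^2)*(2*\<gamma>*H*(-H/Q))/u^3)"
  define B where "B = -(2*R+\<gamma>*H^2)*u*(Q-c i) + a*(3*R+\<gamma>*H^2)*(\<gamma>*H)"
  have DiB: "Di = a*H/(Q*u^3) * B"
    unfolding Di_def B_def using Qp up by (simp add: field_simps power2_eq_square power3_eq_cube)
  have Si: "Q - c i = 2*\<gamma>*H + (cost_sum n c - c i)" unfolding Q_def H_def by simp
  have Sip: "cost_sum n c - c i > 0" by (rule Sk_pos[OF cpos assms(6,10)])
  have Bneg: "B < 0"
  proof -
    have t1: "a*(3*R+\<gamma>*H^2)*(\<gamma>*H) \<le> R*(3*R+\<gamma>*H^2)*(\<gamma>*H)"
      using aR gH assms(4) by (intro mult_right_mono) auto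
    have "R*(3*R+\<gamma>*H^2) \<le> 2*((2*R+\<gamma>*H^2)*u)"
    proof -
      have "R*(\<gamma>*H^2) \<ge> 0" using gH assms(4) by simp
      moreover have "(\<gamma>*H^2)*(\<gamma>*H^2) \<ge> 0" by simp
      moreover have "R*R \<ge> 0" by simp
      ultimately show ?thesis unfolding u_def by (simp add: algebra_simps)
    qed
    then have t2: "R*(3*R+\<gamma>*H^2)*(\<gamma>*H) \<le> 2*((2*R+\<gamma>*H^2)*u)*(\<gamma>*H)"
      using gH by (intro mult_right_mono) auto
    have t3: "(2*R+\<gamma>*H^2)*u*(cost_sum n c - c i) > 0"
      using Sip up gH assms(4) by (intro mult_pos_pos) auto
    have "B = -(2*((2*R+\<gamma>*H^2)*u)*(\<gamma>*H)) - (2*R+\<gamma>*H^2)*u*(cost_sum n c - c i) + a*(3*R+\<gamma>*H^2)*(\<gamma>*H)"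
      unfolding B_def Si by (simp add: algebra_simps)
    then show ?thesis using t1 t2 t3 by linarith
  qed
  have "a*H/(Q*u^3) > 0" using ap Hp Qp up by simp
  then have "Di < 0" unfolding DiB by (rule mult_pos_neg[OF _ Bneg])
  moreover have "((\<lambda>x. pi_star n R \<gamma> (c(i := x)) i) has_real_derivative Di) (at (c i))"
    using Di unfolding Di_def a_def u_def .
  ultimately have P1: "\<exists>D. ((\<lambda>x. pi_star n R \<gamma> (c(i := x)) i) has_real_derivative D) (at (c i)) \<and> D < 0" by blast
  have dj: "((\<lambda>x. (c(j:=x)) i) has_real_derivative 0) (at (c j))" using assms(12) by simp
  note Dj = pi_deriv[OF assms(4,5,6) C assms(11) dj, folded H_def Q_def]
  define Dj where "Dj = a * (-(0 * H + c i * (-H/Q))) * ((2*R+\<gamma>*H^2)/u^2)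
      + a^2/2 * (-(3*R+\<gamma>*H^2)*(2*\<gamma>*H*(-H/Q))/u^3)"
  have e1: "a * (-(0 * H + c i * (-H/Q))) * ((2*R+\<gamma>*H^2)/u^2) > 0"
  proof -
    have "-(0 * H + c i * (-H/Q)) = c i * (H/Q)" by simp
    moreover have "c i * (H/Q) > 0" using ci hq by (rule mult_pos_pos)
    moreover have "(2*R+\<gamma>*H^2)/u^2 > 0" using up gH assms(4) by (simp add: add_pos_nonneg)
    ultimately show ?thesis using ap by (metis mult_pos_pos)
  qed
  have e2: "a^2/2 * (-(3*R+\<gamma>*H^2)*(2*\<gamma>*H*(-H/Q))/u^3) \<ge> 0"
  proof -
    have "-(3*R+\<gamma>*H^2)*(2*\<gamma>*H*(-H/Q)) = (3*R+\<gamma>*H^2)*(2*(\<gamma>*H)*(H/Q))"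
      by (simp add: algebra_simps)
    moreover have "(3*R+\<gamma>*H^2)*(2*(\<gamma>*H)*(H/Q)) \<ge> 0"
      using gH hq assms(4) assms(5) Hp by (intro mult_nonneg_nonneg) auto
    ultimately have X: "0 \<le> -(3*R+\<gamma>*H^2)*(2*\<gamma>*H*(-H/Q))" by linarith
    have "0 \<le> -(3*R+\<gamma>*H^2)*(2*\<gamma>*H*(-H/Q))/u^3" using X up by (intro divide_nonneg_pos) auto
    then show ?thesis by (intro mult_nonneg_nonneg) auto
  qed
  have "Dj > 0" unfolding Dj_def using e1 e2 by linarith
  moreover have "((\<lambda>x. pi_star n R \<gamma> (c(j := x)) i) has_real_derivative Dj) (at (c j))"
    using Dj unfolding Dj_def a_def u_def .
  ultimately have P2: "\<exists>D. ((\<lambda>x. pi_star n R \<gamma> (c(j := x)) i) has_real_derivative D) (at (c j)) \<and> D > 0" by blast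
  show ?thesis using P1 P2 by blast
qed

end
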